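(* Let $S$ be a finite set, let $\sigma,\pi\in\mathrm{Perm}(S)$, and let $\tau\in\mathrm{Cyc}(\pi)$ be a transposition. Let $S'=S\setminus\mathrm{supp}(\tau)$ and $\pi'=\pi|_{S'}$. Then $g(\sigma,\pi)-g(\sigma\setminus\tau,\pi')=1$ if $\tau$ is a $\sigma$-bridge, and $g(\sigma,\pi)-g(\sigma\setminus\tau,\pi')=0$ otherwise.
   Context: $\mathrm{Perm}(S)$ denotes permutations of $S$, $\mathrm{supp}(\sigma)=\{k:\sigma(k)\ne k\}$, and $\mathrm{Cyc}(\sigma)$ is the set of cycles of $\sigma$ including fixed points as trivial cycles ($\#\mathrm{Cyc}$ counts them all). $\pi|_{S'}$ is the restriction of $\pi$ to the union $S'$ of its cycles. A $\sigma$-bridge is a transposition swapping two elements in different cycles of $\sigma$ (fixed points count as cycles). $\sigma\setminus\tau\in\mathrm{Perm}(S\setminus\mathrm{supp}(\tau))$ is $(\sigma\setminus\tau)(k)=(\tau\sigma)^{r(k)}(k)$ with $r(k)\ge1$ minimal such that $(\tau\sigma)^{r(k)}(k)\notin\mathrm{supp}(\tau)$. $\pi\bowtie\sigma\in\mathrm{Perm}(\{0,1\}\times S)$ is $(0,k)\mapsto(1,\sigma(k))$, $(1,k)\mapsto(0,\pi(k))$. The genus is defined by $2g(\sigma,\pi)=\#S+\#\mathrm{Cyc}(\sigma)-\#\mathrm{Cyc}(\pi)-\#\mathrm{Cyc}(\pi\bowtie\sigma)$. *)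

theory Defs
  imports "HOL-Combinatorics.Combinatorics" Complex_Main
begin

definition supp :: "('a \<Rightarrow> 'a) \<Rightarrow> 'a set" where
  "supp p = {k. p k \<noteq> k}"

(* Cyc(p): the cycles of p on S, including fixed points, each cycle represented
   by its underlying set (the orbit). *)
definition cycle_sets :: "'a set \<Rightarrow> ('a \<Rightarrow> 'a) \<Rightarrow> 'a set set" where
  "cycle_sets S p = (\<lambda>x. orbit p x) ` S"

definition num_cycles :: "'a set \<Rightarrow> ('a \<Rightarrow> 'a) \<Rightarrow> nat" where
  "num_cycles S p = card (cycle_sets S p)"

definition is_cycle_of :: "'a set \<Rightarrow> ('a \<Rightarrow> 'a) \<Rightarrow> ('a \<Rightarrow> 'a) \<Rightarrow> bool" where
  "is_cycle_of S p t \<longleftrightarrow> (\<exists>x\<in>S. t = (\<lambda>k. if k \<in> orbit p x then p k else k))"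

definition is_transposition :: "('a \<Rightarrow> 'a) \<Rightarrow> bool" where
  "is_transposition t \<longleftrightarrow> (\<exists>a b. a \<noteq> b \<and> t = transpose a b)"

definition is_bridge :: "'a set \<Rightarrow> ('a \<Rightarrow> 'a) \<Rightarrow> ('a \<Rightarrow> 'a) \<Rightarrow> bool" where
  "is_bridge S s t \<longleftrightarrow> (\<exists>a b. a \<noteq> b \<and> a \<in> S \<and> b \<in> S \<and> t = transpose a b
                             \<and> orbit s a \<noteq> orbit s b)"

(* restriction of p to a union A of its cycles (identity outside A) *)
definition restrict_perm :: "('a \<Rightarrow> 'a) \<Rightarrow> 'a set \<Rightarrow> 'a \<Rightarrow> 'a" where
  "restrict_perm p A = (\<lambda>k. if k \<in> A then p k else k)"

definition remove_perm :: "('a \<Rightarrow> 'a) \<Rightarrow> ('a \<Rightarrow> 'a) \<Rightarrow> 'a \<Rightarrow> 'a" where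
  "remove_perm s t = (\<lambda>k. if k \<in> supp t then k
      else ((t \<circ> s) ^^ (LEAST r. 1 \<le> r \<and> ((t \<circ> s) ^^ r) k \<notin> supp t)) k)"

(* pi \<bowtie> sigma on {0,1} x S, with 0 = False, 1 = True:
   (0,k) \<mapsto> (1, sigma k), (1,k) \<mapsto> (0, pi k) *)
definition bowtie :: "('a \<Rightarrow> 'a) \<Rightarrow> ('a \<Rightarrow> 'a) \<Rightarrow> bool \<times> 'a \<Rightarrow> bool \<times> 'a" where
  "bowtie p s = (\<lambda>(i, k). if i then (False, p k) else (True, s k))"

definition genus :: "'a set \<Rightarrow> ('a \<Rightarrow> 'a) \<Rightarrow> ('a \<Rightarrow> 'a) \<Rightarrow> real" where
  "genus S s p = (real (card S) + real (num_cycles S s) - real (num_cycles S p)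
                   - real (num_cycles (UNIV \<times> S) (bowtie p s))) / 2"

end

theory Submission imports Defs begin


definition fr :: "('a \<Rightarrow> 'a) \<Rightarrow> 'a set \<Rightarrow> 'a \<Rightarrow> 'a" where
  "fr f T = (\<lambda>k. if k \<in> T then k else (f ^^ (LEAST r. 1 \<le> r \<and> (f ^^ r) k \<notin> T)) k)"

lemma remove_perm_fr: "remove_perm s t = fr (t \<circ> s) (supp t)"
  unfolding remove_perm_def fr_def by simp

lemma fr_in_T: "k \<in> T \<Longrightarrow> fr f T k = k"
  by (simp add: fr_def)

lemma fr_eqI:
  assumes "k \<notin> T" "1 \<le> r" "(f ^^ r) k \<notin> T" "\<And>i. 1 \<le> i \<Longrightarrow> i < r \<Longrightarrow> (f ^^ i) k \<in> T"
  shows "fr f T k = (f ^^ r) k"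
proof -
  have "(LEAST r. 1 \<le> r \<and> (f ^^ r) k \<notin> T) = r"
    by (rule Least_equality) (use assms in \<open>auto simp: not_less[symmetric]\<close>)
  then show ?thesis using assms(1) by (simp add: fr_def)
qed

lemma fr_1: "k \<notin> T \<Longrightarrow> f k \<notin> T \<Longrightarrow> fr f T k = f k"
  using fr_eqI[of k T 1 f] by simp

lemma perm_return:
  assumes "f permutes S" "finite S"
  obtains n where "n > 0" "(f ^^ n) k = k"
proof -
  have "permutation f" using assms permutation_permutes by blast
  then have "k \<in> orbit f k" by (rule permutation_self_in_orbit)
  then show ?thesis using that by (auto simp: orbit_altdef)
qed

lemma fr_obtain:
  assumes "f permutes S" "finite S" "k \<notin> T"
  obtains r where "fr f T k = (f ^^ r) k" "1 \<le> r" "(f ^^ r) k \<notin> T"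
    "\<And>i. 1 \<le> i \<Longrightarrow> i < r \<Longrightarrow> (f ^^ i) k \<in> T"
proof -
  obtain n where n: "n > 0" "(f ^^ n) k = k" using perm_return[OF assms(1,2)] by blast
  define r where "r = (LEAST r. 1 \<le> r \<and> (f ^^ r) k \<notin> T)"
  have ex: "1 \<le> n \<and> (f ^^ n) k \<notin> T" using n assms(3) by simp
  have r: "1 \<le> r \<and> (f ^^ r) k \<notin> T" unfolding r_def by (rule LeastI[where P="\<lambda>r. 1 \<le> r \<and> (f ^^ r) k \<notin> T", OF ex])
  have "\<And>i. 1 \<le> i \<Longrightarrow> i < r \<Longrightarrow> (f ^^ i) k \<in> T"
    using not_less_Least[of _ "\<lambda>r. 1 \<le> r \<and> (f ^^ r) k \<notin> T"] unfolding r_def by blast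
  moreover have "fr f T k = (f ^^ r) k" using assms(3) by (simp add: fr_def r_def)
  ultimately show ?thesis using that r by blast
qed

lemma funpow_split: "m \<le> n \<Longrightarrow> (f ^^ n) x = (f ^^ (n - m)) ((f ^^ m) x)"
  by (metis funpow_add comp_apply le_add_diff_inverse2)

lemma funpow_in_S: "f permutes S \<Longrightarrow> x \<in> S \<Longrightarrow> (f ^^ n) x \<in> S"
  by (induction n) (auto simp: permutes_in_image)

lemma orbit_fr:
  assumes "f permutes S" "finite S" "x \<notin> T"
  shows "orbit (fr f T) x = orbit f x - T"
proof
  show "orbit (fr f T) x \<subseteq> orbit f x - T"
  proof
    fix y assume "y \<in> orbit (fr f T) x"
    then show "y \<in> orbit f x - T"
    proof induction
      case base
      obtain r where "fr f T x = (f ^^ r) x" "1 \<le> r" "(f ^^ r) x \<notin> T"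
        using fr_obtain[OF assms] by blast
      then show ?case by (auto simp: orbit_altdef)
    next
      case (step y)
      obtain r where "fr f T y = (f ^^ r) y" "1 \<le> r" "(f ^^ r) y \<notin> T"
        using fr_obtain[OF assms(1,2), of y T] step by blast
      then show ?case using step by (auto intro: funpow_in_orbit)
    qed
  qed
next
  have key: "\<And>x. x \<notin> T \<Longrightarrow> 1 \<le> n \<Longrightarrow> (f ^^ n) x \<notin> T \<Longrightarrow> (f ^^ n) x \<in> orbit (fr f T) x" for n
  proof (induction n rule: less_induct)
    case (less n x)
    obtain r where r: "fr f T x = (f ^^ r) x" "1 \<le> r" "(f ^^ r) x \<notin> T"
        "\<And>i. 1 \<le> i \<Longrightarrow> i < r \<Longrightarrow> (f ^^ i) x \<in> T"
      using fr_obtain[OF assms(1,2) less.prems(1)] by blast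
    have "r \<le> n" using r(4)[of n] less.prems by (meson not_le)
    show ?case
    proof (cases "r = n")
      case True then show ?thesis using r(1) by (metis orbit.base)
    next
      case False
      then have lt: "r < n" using \<open>r \<le> n\<close> by simp
      have eq: "(f ^^ n) x = (f ^^ (n - r)) (fr f T x)" using r(1) funpow_split[OF \<open>r \<le> n\<close>] by simp
      have "(f ^^ (n - r)) (fr f T x) \<in> orbit (fr f T) (fr f T x)"
        using less.IH[of "n - r" "fr f T x"] lt r less.prems eq by simp
      then show ?thesis using eq by (metis orbit_subset)
    qed
  qed
  show "orbit f x - T \<subseteq> orbit (fr f T) x"
  proof
    fix y assume "y \<in> orbit f x - T"
    then obtain n where "y = (f ^^ n) x" "0 < n" "y \<notin> T" by (auto simp: orbit_altdef)
    then show "y \<in> orbit (fr f T) x" using key[OF assms(3), of n] by simp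
  qed
qed

lemma fr_permutes:
  assumes "f permutes S" "finite S"
  shows "fr f T permutes (S - T)"
proof (rule bij_imp_permutes)
  show "fr f T x = x" if "x \<notin> S - T" for x
  proof (cases "x \<in> T")
    case True then show ?thesis by (simp add: fr_in_T)
  next
    case False
    then have "x \<notin> S" using that by blast
    then have "f x = x" using assms(1) permutes_not_in by metis
    then show ?thesis using fr_1[of x T f] False by simp
  qed
  have maps: "fr f T x \<in> S - T" if "x \<in> S - T" for x
  proof -
    have xT: "x \<notin> T" using that by blast
    obtain r where "fr f T x = (f ^^ r) x" "(f ^^ r) x \<notin> T"
      using fr_obtain[OF assms xT] by blast
    then show ?thesis using funpow_in_S[OF assms(1)] that by auto
  qed
  have injf: "inj (f ^^ m)" for m using assms(1) permutes_inj inj_fn by blast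
  have aux: "x = y" if "x \<in> S - T" "y \<in> S - T" "fr f T x = fr f T y"
     "fr f T x = (f ^^ r) x" "1 \<le> r" "fr f T y = (f ^^ s) y"
     "\<And>i. 1 \<le> i \<Longrightarrow> i < s \<Longrightarrow> (f ^^ i) y \<in> T" "r \<le> s" for x y r s
  proof -
    have "(f ^^ s) y = (f ^^ r) ((f ^^ (s - r)) y)"
      using \<open>r \<le> s\<close> by (metis funpow_add comp_apply le_add_diff_inverse)
    then have "(f ^^ r) x = (f ^^ r) ((f ^^ (s - r)) y)"
      using that by simp
    then have xe: "x = (f ^^ (s - r)) y" using injf[of r] by (meson injD)
    show ?thesis
    proof (cases "s - r = 0")
      case True then show ?thesis using xe by simp
    next
      case False
      then have "(f ^^ (s - r)) y \<in> T" using that(5) that(7)[of "s - r"] by simp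
      then show ?thesis using xe that(1) by simp
    qed
  qed
  have "inj_on (fr f T) (S - T)"
  proof (rule inj_onI)
    fix x y assume xy: "x \<in> S - T" "y \<in> S - T" "fr f T x = fr f T y"
    obtain r where r: "fr f T x = (f ^^ r) x" "1 \<le> r" "(f ^^ r) x \<notin> T"
        "\<And>i. 1 \<le> i \<Longrightarrow> i < r \<Longrightarrow> (f ^^ i) x \<in> T"
      using fr_obtain[OF assms, of x T] xy by (metis DiffD2)
    obtain s where s: "fr f T y = (f ^^ s) y" "1 \<le> s" "(f ^^ s) y \<notin> T"
        "\<And>i. 1 \<le> i \<Longrightarrow> i < s \<Longrightarrow> (f ^^ i) y \<in> T"
      using fr_obtain[OF assms, of y T] xy by (metis DiffD2)
    show "x = y"
    proof (cases "r \<le> s")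
      case True then show ?thesis using aux[of x y r s] xy r s by blast
    next
      case False then show ?thesis using aux[of y x s r] xy r s by fastforce
    qed
  qed
  moreover have "fr f T ` (S - T) = S - T"
    using endo_inj_surj[of "S - T" "fr f T"] maps calculation assms(2) by blast
  ultimately show "bij_betw (fr f T) (S - T) (S - T)" by (simp add: bij_betw_def)
qed



lemma perm_of: "f permutes S \<Longrightarrow> finite S \<Longrightarrow> permutation f"
  unfolding permutation_permutes by blast

lemma orbit_eq_of_mem: "permutation f \<Longrightarrow> y \<in> orbit f x \<Longrightarrow> orbit f y = orbit f x"
  by (rule orbit_cyclic_eq3[OF cyclic_on_orbit'])

lemma self_orb: "f permutes S \<Longrightarrow> finite S \<Longrightarrow> x \<in> orbit f x"
  by (rule permutation_self_in_orbit[OF perm_of])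

lemma count_fr:
  assumes "f permutes S" "finite S"
  shows "num_cycles (S - T) (fr f T) + card {Q \<in> cycle_sets S f. Q \<subseteq> T} = num_cycles S f"
proof -
  let ?cs = "cycle_sets S f"
  have pf: "permutation f" using assms perm_of by blast
  have fin: "finite ?cs" using assms(2) by (simp add: cycle_sets_def)
  have eq: "?cs = {Q\<in>?cs. Q \<subseteq> T} \<union> {Q\<in>?cs. \<not> Q \<subseteq> T}" by blast
  have "card ?cs = card ({Q\<in>?cs. Q \<subseteq> T} \<union> {Q\<in>?cs. \<not> Q \<subseteq> T})"
    by (rule arg_cong[OF eq])
  also have "\<dots> = card {Q\<in>?cs. Q \<subseteq> T} + card {Q\<in>?cs. \<not> Q \<subseteq> T}"
    by (rule card_Un_disjoint) (use fin in auto)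
  finally have c1: "card ?cs = card {Q\<in>?cs. Q \<subseteq> T} + card {Q\<in>?cs. \<not> Q \<subseteq> T}" .
  have img: "cycle_sets (S - T) (fr f T) = (\<lambda>Q. Q - T) ` {Q\<in>?cs. \<not> Q \<subseteq> T}"
  proof
    show "cycle_sets (S - T) (fr f T) \<subseteq> (\<lambda>Q. Q - T) ` {Q\<in>?cs. \<not> Q \<subseteq> T}"
    proof
      fix P assume "P \<in> cycle_sets (S - T) (fr f T)"
      then obtain x where x: "x \<in> S" "x \<notin> T" "P = orbit (fr f T) x" by (auto simp: cycle_sets_def)
      then have "P = orbit f x - T" using orbit_fr[OF assms] by simp
      moreover have "orbit f x \<in> ?cs" using x by (auto simp: cycle_sets_def)
      moreover have "\<not> orbit f x \<subseteq> T" using x self_orb[OF assms, of x] by blast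
      ultimately show "P \<in> (\<lambda>Q. Q - T) ` {Q\<in>?cs. \<not> Q \<subseteq> T}" by blast
    qed
  next
    show "(\<lambda>Q. Q - T) ` {Q\<in>?cs. \<not> Q \<subseteq> T} \<subseteq> cycle_sets (S - T) (fr f T)"
    proof
      fix P assume "P \<in> (\<lambda>Q. Q - T) ` {Q\<in>?cs. \<not> Q \<subseteq> T}"
      then obtain y Q where y: "y \<in> S" "Q = orbit f y" "\<not> Q \<subseteq> T" "P = Q - T"
        by (auto simp: cycle_sets_def)
      then obtain x where x: "x \<in> Q" "x \<notin> T" by blast
      have xS: "x \<in> S" using x y permutes_orbit_subset[OF assms(1)] by blast
      have "orbit f x = Q" using orbit_eq_of_mem[OF pf] x y by simp
      then have "P = orbit (fr f T) x" using orbit_fr[OF assms x(2)] y by simp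
      then show "P \<in> cycle_sets (S - T) (fr f T)" using xS x by (auto simp: cycle_sets_def)
    qed
  qed
  have inj: "inj_on (\<lambda>Q. Q - T) {Q\<in>?cs. \<not> Q \<subseteq> T}"
  proof (rule inj_onI)
    fix Q1 Q2 assume a: "Q1 \<in> {Q\<in>?cs. \<not> Q \<subseteq> T}" "Q2 \<in> {Q\<in>?cs. \<not> Q \<subseteq> T}" "Q1 - T = Q2 - T"
    then obtain x where x: "x \<in> Q1" "x \<notin> T" by blast
    then have x2: "x \<in> Q2" using a by blast
    obtain y1 where "Q1 = orbit f y1" using a by (auto simp: cycle_sets_def)
    moreover obtain y2 where "Q2 = orbit f y2" using a by (auto simp: cycle_sets_def)
    ultimately show "Q1 = Q2" using orbit_eq_of_mem[OF pf] x x2 by metis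
  qed
  have "num_cycles (S - T) (fr f T) = card {Q\<in>?cs. \<not> Q \<subseteq> T}"
    unfolding num_cycles_def img using card_image[OF inj] by simp
  then show ?thesis using c1 unfolding num_cycles_def by simp
qed

lemma cycle_sets_cong:
  assumes "\<And>x. x \<in> A \<Longrightarrow> g1 x = g2 x" "\<And>x. x \<in> A \<Longrightarrow> g1 x \<in> A"
  shows "cycle_sets A g1 = cycle_sets A g2"
proof -
  have "orbit g1 x = orbit g2 x" if "x \<in> A" for x
    by (rule orbit_cong0) (use assms that in auto)
  then show ?thesis unfolding cycle_sets_def by (auto intro: image_cong)
qed

lemma num_cycles_cong:
  assumes "\<And>x. x \<in> A \<Longrightarrow> g1 x = g2 x" "\<And>x. x \<in> A \<Longrightarrow> g1 x \<in> A"
  shows "num_cycles A g1 = num_cycles A g2"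
  using cycle_sets_cong[OF assms] by (simp add: num_cycles_def)

lemma num_cycles_conj:
  assumes "finite A" "q permutes A" "inj h" "\<And>x. x \<in> A \<Longrightarrow> g (h x) = h (q x)"
  shows "num_cycles (h ` A) g = num_cycles A q"
proof -
  have o: "orbit g (h x) = h ` orbit q x" if "x \<in> A" for x
  proof -
    have "x \<in> orbit q x" using self_orb[OF assms(2,1)] .
    moreover have "\<And>y. y \<in> orbit q x \<Longrightarrow> g (h y) = h (q y)"
      using assms(4) permutes_orbit_subset[OF assms(2) that] by blast
    ultimately show ?thesis using orbit_inverse[of x q g h] by simp
  qed
  have "cycle_sets (h ` A) g = image h ` cycle_sets A q"
    unfolding cycle_sets_def image_image using o by (auto intro: image_cong)
  moreover have "inj_on (image h) (cycle_sets A q)"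
    using assms(3) by (simp add: inj_image_eq_iff inj_on_def)
  ultimately show ?thesis by (simp add: num_cycles_def card_image)
qed

lemma fr_comp:
  assumes "f permutes S" "finite S" "\<And>x. x \<in> T \<Longrightarrow> h x = x" "\<And>x. x \<notin> T \<Longrightarrow> h x \<notin> T"
  shows "h \<circ> fr f T = fr (h \<circ> f) T"
proof
  fix x show "(h \<circ> fr f T) x = fr (h \<circ> f) T x"
  proof (cases "x \<in> T")
    case True then show ?thesis using assms(3) by (simp add: fr_in_T)
  next
    case False
    obtain r where r: "fr f T x = (f ^^ r) x" "1 \<le> r" "(f ^^ r) x \<notin> T"
        "\<And>i. 1 \<le> i \<Longrightarrow> i < r \<Longrightarrow> (f ^^ i) x \<in> T"
      using fr_obtain[OF assms(1,2) False] by blast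
    have it: "i < r \<Longrightarrow> ((h \<circ> f) ^^ i) x = (f ^^ i) x" for i
    proof (induction i)
      case (Suc i)
      then have "(f ^^ Suc i) x \<in> T" using r(4)[of "Suc i"] by simp
      then show ?case using Suc assms(3) by simp
    qed simp
    obtain m where m: "r = Suc m" using r(2) by (cases r) auto
    have lst: "((h \<circ> f) ^^ r) x = h ((f ^^ r) x)"
      using it[of m] m by simp
    have "fr (h \<circ> f) T x = ((h \<circ> f) ^^ r) x"
      by (rule fr_eqI) (use False r it lst assms(4) in auto)
    then show ?thesis using lst r(1) by simp
  qed
qed



lemma single_fr:
  assumes "f permutes S" "finite S" "x \<noteq> b"
  shows "fr f {b} x = (if f x = b then f b else f x)"
proof (cases "f x = b")
  case False then show ?thesis using fr_1[of x "{b}" f] assms(3) by simp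
next
  case True
  have "f b \<noteq> b" using True assms(3) permutes_inj[OF assms(1)] by (metis injD)
  have "fr f {b} x = (f ^^ 2) x"
  proof (rule fr_eqI)
    fix i :: nat assume "1 \<le> i" "i < 2"
    then have "i = 1" by simp
    then show "(f ^^ i) x \<in> {b}" using True by simp
  qed (use assms(3) True \<open>f b \<noteq> b\<close> in \<open>auto simp: numeral_2_eq_2\<close>)
  then show ?thesis using True by (simp add: numeral_2_eq_2)
qed

lemma count1:
  assumes "f permutes S" "finite S" "b \<in> S"
  shows "num_cycles (S - {b}) (fr f {b}) + (if f b = b then 1 else 0) = num_cycles S f"
proof -
  have "{Q \<in> cycle_sets S f. Q \<subseteq> {b}} = (if f b = b then {{b}} else {})"
  proof (cases "f b = b")
    case True
    have "orbit f b = {b}" using True orbit_eq_singleton_iff by metis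
    then have "{b} \<in> cycle_sets S f" using assms(3) unfolding cycle_sets_def by force
    moreover have "Q = {b}" if Qa: "Q \<in> cycle_sets S f" "Q \<subseteq> {b}" for Q
    proof -
      obtain y where "Q = orbit f y" using Qa(1) unfolding cycle_sets_def by blast
      then have "Q \<noteq> {}" using orbit_nonempty by metis
      then show ?thesis using Qa(2) by blast
    qed
    ultimately show ?thesis using True by auto
  next
    case False
    have "False" if Qa: "Q \<in> cycle_sets S f" "Q \<subseteq> {b}" for Q
    proof -
      obtain y where y: "y \<in> S" "Q = orbit f y" using Qa(1) unfolding cycle_sets_def by blast
      then have "y \<in> Q" using self_orb[OF assms(1,2)] by blast
      then have "y = b" using Qa(2) by blast
      then have "orbit f b \<noteq> {}" using orbit_nonempty by metis
      then have "orbit f b = {b}" using y Qa(2) \<open>y = b\<close> by blast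
      then show False using False orbit_eq_singleton_iff by metis
    qed
    then show ?thesis using False by auto
  qed
  then show ?thesis using count_fr[OF assms(1,2), of "{b}"] by (auto split: if_splits)
qed

lemma transp_count:
  assumes "finite S" "\<sigma> permutes S" "a \<in> S" "b \<in> S" "a \<noteq> b"
  shows "int (num_cycles S (transpose a b \<circ> \<sigma>)) =
         int (num_cycles S \<sigma>) + (if orbit \<sigma> a = orbit \<sigma> b then 1 else -1)"
  using assms
proof (induction "card S" arbitrary: S \<sigma> a b rule: less_induct)
  case less
  note fin = less.prems(1) and sp = less.prems(2) and aS = less.prems(3) and bS = less.prems(4)
    and ab = less.prems(5)
  define g where "g = transpose a b \<circ> \<sigma>"
  have gp: "g permutes S" unfolding g_def
    using permutes_compose[OF sp permutes_swap_id[OF aS bS]] .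
  have injs: "\<And>x y. \<sigma> x = \<sigma> y \<Longrightarrow> x = y" using permutes_inj[OF sp] by (meson injD)
  have pf: "permutation \<sigma>" using perm_of[OF sp fin] .
  have cg: "num_cycles (S - {b}) (fr g {b}) + (if g b = b then 1 else 0) = num_cycles S g"
    using count1[OF gp fin bS] .
  have cs: "num_cycles (S - {b}) (fr \<sigma> {b}) + (if \<sigma> b = b then 1 else 0) = num_cycles S \<sigma>"
    using count1[OF sp fin bS] .
  have sbp: "fr \<sigma> {b} permutes (S - {b})" using fr_permutes[OF sp fin] .
  have frg: "fr g {b} x = (if g x = b then g b else g x)" if "x \<noteq> b" for x
    using single_fr[OF gp fin that] .
  have frs: "fr \<sigma> {b} x = (if \<sigma> x = b then \<sigma> b else \<sigma> x)" if "x \<noteq> b" for x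
    using single_fr[OF sp fin that] .
  consider "\<sigma> b = b" | "\<sigma> b = a" | "\<sigma> b \<noteq> a" "\<sigma> b \<noteq> b" by blast
  then show ?case
  proof cases
    case 1
    have "num_cycles (S - {b}) (fr \<sigma> {b}) = num_cycles (S - {b}) (fr g {b})"
    proof (rule num_cycles_cong)
      fix x assume x: "x \<in> S - {b}"
      show "fr \<sigma> {b} x \<in> S - {b}" using permutes_in_image[OF sbp] x by simp
      have "\<sigma> x \<noteq> b"
      proof
        assume "\<sigma> x = b"
        then have "\<sigma> x = \<sigma> b" using 1 by simp
        then have "x = b" by (rule injs)
        then show False using x by simp
      qed
      then show "fr \<sigma> {b} x = fr g {b} x" using x frg frs 1 ab
        by (auto simp: g_def transpose_def)
    qed
    moreover have "g b \<noteq> b" using 1 ab by (simp add: g_def)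
    moreover have "orbit \<sigma> a \<noteq> orbit \<sigma> b"
    proof -
      have "orbit \<sigma> b = {b}" using orbit_eq_singleton_iff[of \<sigma> b] 1 by simp
      moreover have "a \<in> orbit \<sigma> a" using self_orb[OF sp fin] .
      ultimately show ?thesis using ab by auto
    qed
    ultimately have "num_cycles S g + 1 = num_cycles S \<sigma>" using cg cs 1 by simp
    then show ?thesis using \<open>orbit \<sigma> a \<noteq> orbit \<sigma> b\<close> unfolding g_def by simp
  next
    case 2
    have "num_cycles (S - {b}) (fr \<sigma> {b}) = num_cycles (S - {b}) (fr g {b})"
    proof (rule num_cycles_cong)
      fix x assume x: "x \<in> S - {b}"
      show "fr \<sigma> {b} x \<in> S - {b}" using permutes_in_image[OF sbp] x by simp
      have "\<sigma> x \<noteq> a"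
      proof
        assume "\<sigma> x = a"
        then have "\<sigma> x = \<sigma> b" using 2 by simp
        then have "x = b" by (rule injs)
        then show False using x by simp
      qed
      then show "fr \<sigma> {b} x = fr g {b} x" using x frg frs 2 ab
        by (auto simp: g_def transpose_def)
    qed
    moreover have "g b = b" using 2 ab by (simp add: g_def)
    moreover have "orbit \<sigma> a = orbit \<sigma> b"
    proof -
      have "a \<in> orbit \<sigma> b" using orbit.base[of \<sigma> b] 2 by simp
      then show ?thesis using orbit_eq_of_mem[OF pf] by blast
    qed
    ultimately show ?thesis using cg cs 2 ab unfolding g_def by simp
  next
    case 3
    define c where "c = \<sigma> b"
    have cS: "c \<in> S - {b}" using 3 bS permutes_in_image[OF sp, of b] unfolding c_def by simp
    have aS': "a \<in> S - {b}" using aS ab by blast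
    have ac: "a \<noteq> c" using 3 c_def by simp
    have lt: "card (S - {b}) < card S" using fin bS by (meson card_Diff1_less)
    have IH: "int (num_cycles (S - {b}) (transpose a c \<circ> fr \<sigma> {b})) =
         int (num_cycles (S - {b}) (fr \<sigma> {b})) +
         (if orbit (fr \<sigma> {b}) a = orbit (fr \<sigma> {b}) c then 1 else -1)"
      using less.hyps[OF lt _ sbp aS' cS ac] fin by simp
    have tp: "transpose a c \<circ> fr \<sigma> {b} permutes (S - {b})"
      using permutes_compose[OF sbp permutes_swap_id[OF aS' cS]] .
    have "num_cycles (S - {b}) (transpose a c \<circ> fr \<sigma> {b}) = num_cycles (S - {b}) (fr g {b})"
    proof (rule num_cycles_cong)
      fix x assume x: "x \<in> S - {b}"
      show "(transpose a c \<circ> fr \<sigma> {b}) x \<in> S - {b}" using permutes_in_image[OF tp] x by simp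
      have "\<sigma> x \<noteq> c"
      proof
        assume "\<sigma> x = c"
        then have "\<sigma> x = \<sigma> b" using c_def by simp
        then have "x = b" by (rule injs)
        then show False using x by simp
      qed
      then show "(transpose a c \<circ> fr \<sigma> {b}) x = fr g {b} x" using x frg frs 3 ab ac
        by (auto simp: g_def transpose_def c_def)
    qed
    moreover have "g b = c" using 3 ab by (simp add: g_def c_def)
    moreover have "(orbit (fr \<sigma> {b}) a = orbit (fr \<sigma> {b}) c) = (orbit \<sigma> a = orbit \<sigma> b)"
    proof -
      have oa: "orbit (fr \<sigma> {b}) a = orbit \<sigma> a - {b}" using orbit_fr[OF sp fin, of a "{b}"] ab by simp
      have oc: "orbit (fr \<sigma> {b}) c = orbit \<sigma> b - {b}"
        using orbit_fr[OF sp fin, of c "{b}"] cS permutation_orbit_step[OF pf, of b] c_def by simp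
      have "orbit \<sigma> a = orbit \<sigma> b" if "orbit \<sigma> a - {b} = orbit \<sigma> b - {b}"
      proof -
        have "a \<in> orbit \<sigma> a" using self_orb[OF sp fin] .
        then have "a \<in> orbit \<sigma> b" using that ab by blast
        then show ?thesis using orbit_eq_of_mem[OF pf] by blast
      qed
      then show ?thesis using oa oc by auto
    qed
    ultimately show ?thesis using cg cs 3 IH cS unfolding g_def c_def by auto
  qed
qed



lemma bowtie_count:
  assumes "finite A" "p permutes A" "s permutes A"
  shows "num_cycles (UNIV \<times> A) (bowtie p s) = num_cycles A (p \<circ> s)"
proof -
  define bw where "bw = bowtie p s"
  define bw' where "bw' = (\<lambda>z. if z \<in> UNIV \<times> A then bw z else z)"
  have bwv: "bw (i, k) = (if i then (False, p k) else (True, s k))" for i k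
    by (simp add: bw_def bowtie_def)
  have pA: "\<And>k. p k \<in> A \<longleftrightarrow> k \<in> A" using permutes_in_image[OF assms(2)] by blast
  have sA: "\<And>k. s k \<in> A \<longleftrightarrow> k \<in> A" using permutes_in_image[OF assms(3)] by blast
  have maps: "bw z \<in> UNIV \<times> A" if "z \<in> UNIV \<times> A" for z
    using that by (cases z) (auto simp: bwv pA sA)
  have c1: "num_cycles (UNIV \<times> A) bw' = num_cycles (UNIV \<times> A) bw"
    by (rule num_cycles_cong) (auto simp: bw'_def maps)
  have finU: "finite (UNIV \<times> A :: (bool \<times> _) set)" using assms(1) by simp
  have injp: "\<And>x y. p x = p y \<Longrightarrow> x = y" using permutes_inj[OF assms(2)] by (meson injD)
  have injs: "\<And>x y. s x = s y \<Longrightarrow> x = y" using permutes_inj[OF assms(3)] by (meson injD)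
  have inj: "inj_on bw' (UNIV \<times> A)"
  proof (rule inj_onI)
    fix z w assume zw: "z \<in> UNIV \<times> A" "w \<in> UNIV \<times> A" "bw' z = bw' w"
    obtain i k where z: "z = (i, k)" by (cases z)
    obtain j l where w: "w = (j, l)" by (cases w)
    have "bw (i, k) = bw (j, l)" using zw unfolding z w bw'_def by simp
    then show "z = w" unfolding z w by (cases i; cases j) (auto simp: bwv dest: injp injs)
  qed
  have mapsb: "bw' ` (UNIV \<times> A) \<subseteq> UNIV \<times> A" unfolding image_subset_iff bw'_def using maps by simp
  have bwp: "bw' permutes (UNIV \<times> A)"
  proof (rule bij_imp_permutes)
    show "bij_betw bw' (UNIV \<times> A) (UNIV \<times> A)"
      using endo_inj_surj[OF finU mapsb inj] inj by (simp add: bij_betw_def)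
  qed (simp add: bw'_def)
  define T where "T = ({True} \<times> A :: (bool \<times> _) set)"
  have c2: "num_cycles ((UNIV \<times> A) - T) (fr bw' T) + card {Q \<in> cycle_sets (UNIV \<times> A) bw'. Q \<subseteq> T}
      = num_cycles (UNIV \<times> A) bw'"
    using count_fr[OF bwp finU] .
  have empty: "{Q \<in> cycle_sets (UNIV \<times> A) bw'. Q \<subseteq> T} = {}"
  proof -
    have False if Qa: "Q \<in> cycle_sets (UNIV \<times> A) bw'" "Q \<subseteq> T" for Q
    proof -
      obtain z where z: "z \<in> UNIV \<times> A" "Q = orbit bw' z" using Qa(1) unfolding cycle_sets_def by blast
      obtain i k where ik: "z = (i, k)" by (cases z)
      show False
      proof (cases i)
        case True
        have "bw' z \<in> Q" using orbit.base[of bw' z] z by simp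
        moreover have "bw' z = (False, p k)" using z ik True by (simp add: bw'_def bwv)
        ultimately show False using Qa(2) T_def by auto
      next
        case False
        have "z \<in> Q" using z self_orb[OF bwp finU] by simp
        then show False using Qa(2) T_def ik False by auto
      qed
    qed
    then show ?thesis by blast
  qed
  have diff: "(UNIV \<times> A) - T = Pair False ` A" unfolding T_def by auto
  have psp: "p \<circ> s permutes A" using permutes_compose[OF assms(3) assms(2)] .
  have frv: "fr bw' T (False, k) = (False, (p \<circ> s) k)" if "k \<in> A" for k
  proof -
    have "fr bw' T (False, k) = (bw' ^^ 2) (False, k)"
    proof (rule fr_eqI)
      fix i :: nat assume "1 \<le> i" "i < 2"
      then have "i = 1" by simp
      then show "(bw' ^^ i) (False, k) \<in> T" using that sA by (simp add: bw'_def bwv T_def)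
    qed (use that sA pA in \<open>auto simp: bw'_def bwv T_def numeral_2_eq_2\<close>)
    then show ?thesis using that sA by (simp add: bw'_def bwv numeral_2_eq_2)
  qed
  have c3: "num_cycles (Pair False ` A) (fr bw' T) = num_cycles A (p \<circ> s)"
    by (rule num_cycles_conj[OF assms(1) psp]) (auto simp: inj_def frv)
  show ?thesis using c1 c2 c3 empty diff unfolding bw_def by simp
qed



lemma supp_transpose: "a \<noteq> b \<Longrightarrow> supp (transpose a b) = {a, b}"
  by (auto simp: supp_def transpose_def)

lemma orbit_agree:
  assumes "g1 permutes S" "finite S" "orbit g1 y \<subseteq> T" "\<And>z. g1 z \<in> T \<Longrightarrow> g2 z = g1 z"
  shows "orbit g2 y = orbit g1 y"
proof (rule orbit_cong)
  show "y \<in> orbit g1 y" using self_orb[OF assms(1,2)] .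
  fix s assume "s \<in> orbit g1 y"
  then have "g1 s \<in> orbit g1 y" by (rule orbit.step)
  then show "g2 s = g1 s" using assms(3,4) by blast
qed

lemma cyc_in_T_eq:
  assumes "g1 permutes S" "g2 permutes S" "finite S"
    "\<And>z. g1 z \<in> T \<Longrightarrow> g2 z = g1 z" "\<And>z. g2 z \<in> T \<Longrightarrow> g1 z = g2 z"
  shows "{Q \<in> cycle_sets S g1. Q \<subseteq> T} = {Q \<in> cycle_sets S g2. Q \<subseteq> T}"
proof -
  have sub: "{Q \<in> cycle_sets S h1. Q \<subseteq> T} \<subseteq> {Q \<in> cycle_sets S h2. Q \<subseteq> T}"
    if "h1 permutes S" "\<And>z. h1 z \<in> T \<Longrightarrow> h2 z = h1 z" for h1 h2
  proof
    fix Q assume "Q \<in> {Q \<in> cycle_sets S h1. Q \<subseteq> T}"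
    then obtain y where y: "y \<in> S" "Q = orbit h1 y" "Q \<subseteq> T" unfolding cycle_sets_def by blast
    then have "orbit h2 y = Q" using orbit_agree[OF that(1) assms(3), of y T h2] that(2) by simp
    then show "Q \<in> {Q \<in> cycle_sets S h2. Q \<subseteq> T}" using y unfolding cycle_sets_def by blast
  qed
  show ?thesis using sub[OF assms(1) assms(4)] sub[OF assms(2) assms(5)] by blast
qed

theorem lemma3p17:
  fixes S :: "'a set" and \<sigma> \<pi> \<tau> :: "'a \<Rightarrow> 'a"
  assumes "finite S"
    and "\<sigma> permutes S" and "\<pi> permutes S"
    and "is_cycle_of S \<pi> \<tau>" and "is_transposition \<tau>"
  shows "genus S \<sigma> \<pi> - genus (S - supp \<tau>) (remove_perm \<sigma> \<tau>) (restrict_perm \<pi> (S - supp \<tau>))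
           = (if is_bridge S \<sigma> \<tau> then 1 else 0)"
proof -
  note fin = assms(1) and sp = assms(2) and pp = assms(3)
  obtain x where xS: "x \<in> S" and tdef: "\<tau> = (\<lambda>k. if k \<in> orbit \<pi> x then \<pi> k else k)"
    using assms(4) unfolding is_cycle_of_def by blast
  obtain a b where ab: "a \<noteq> b" and tab: "\<tau> = transpose a b"
    using assms(5) unfolding is_transposition_def by blast
  have "(if a \<in> orbit \<pi> x then \<pi> a else a) = b" using fun_cong[OF tdef, of a] tab by simp
  then have pa: "\<pi> a = b" and aO: "a \<in> orbit \<pi> x" using ab by (auto split: if_splits)
  have "(if b \<in> orbit \<pi> x then \<pi> b else b) = a" using fun_cong[OF tdef, of b] tab by simp
  then have pb: "\<pi> b = a" and bO: "b \<in> orbit \<pi> x" using ab by (auto split: if_splits)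
  have aS: "a \<in> S" and bS: "b \<in> S" using aO bO permutes_orbit_subset[OF pp xS] by auto
  define T where "T = {a, b}"
  have suppT: "supp \<tau> = T" using supp_transpose[OF ab] tab T_def by simp
  have TS: "T \<subseteq> S" using aS bS T_def by simp
  have injp: "\<And>u v. \<pi> u = \<pi> v \<Longrightarrow> u = v" using permutes_inj[OF pp] by (meson injD)
  have piT: "w \<in> T \<Longrightarrow> \<pi> w = \<tau> w" for w using pa pb unfolding T_def tab by auto
  have piNT: "w \<notin> T \<Longrightarrow> \<pi> w \<notin> T" for w
  proof
    assume "w \<notin> T" "\<pi> w \<in> T"
    then have "\<pi> w = \<pi> b \<or> \<pi> w = \<pi> a" using pa pb T_def by auto
    then show False using injp \<open>w \<notin> T\<close> T_def by blast
  qed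
  have tauNT: "w \<notin> T \<Longrightarrow> \<tau> w = w" for w unfolding T_def tab by auto
  define f where "f = \<tau> \<circ> \<sigma>"
  have fp: "f permutes S" unfolding f_def tab using permutes_compose[OF sp permutes_swap_id[OF aS bS]] .
  define h where "h = restrict_perm \<pi> (S - T)"
  have h_fr: "h = fr \<pi> T"
  proof
    fix k show "h k = fr \<pi> T k"
    proof (cases "k \<in> T")
      case True then show ?thesis by (simp add: h_def restrict_perm_def fr_in_T)
    next
      case False
      have "fr \<pi> T k = \<pi> k" using fr_1[of k T \<pi>, OF False piNT[OF False]] .
      moreover have "h k = \<pi> k" using False permutes_not_in[OF pp, of k] by (auto simp: h_def restrict_perm_def)
      ultimately show ?thesis by simp
    qed
  qed
  have hp: "h permutes (S - T)" unfolding h_fr using fr_permutes[OF pp fin] .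
  have hf: "h \<circ> f = \<pi> \<circ> \<sigma>"
  proof
    fix y
    have "h (\<tau> z) = \<pi> z" for z
    proof (cases "z \<in> T")
      case True
      then have "\<tau> z \<in> T" unfolding T_def tab by auto
      then show ?thesis using True piT by (simp add: h_def restrict_perm_def)
    next
      case False
      then show ?thesis using tauNT[OF False] permutes_not_in[OF pp, of z]
        by (auto simp: h_def restrict_perm_def)
    qed
    then show "(h \<circ> f) y = (\<pi> \<circ> \<sigma>) y" by (simp add: f_def)
  qed
  have hT: "\<And>w. w \<in> T \<Longrightarrow> h w = w" by (simp add: h_def restrict_perm_def)
  have hNT: "h w \<notin> T" if "w \<notin> T" for w
    unfolding h_fr using fr_1[of w T \<pi>, OF that piNT[OF that]] piNT[OF that] by simp
  have rem: "remove_perm \<sigma> \<tau> = fr f T" unfolding remove_perm_fr f_def suppT ..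
  have comp: "h \<circ> fr f T = fr (\<pi> \<circ> \<sigma>) T" using fr_comp[OF fp fin hT hNT] hf by simp
  have psp: "\<pi> \<circ> \<sigma> permutes S" using permutes_compose[OF sp pp] .
  define t where "t = card {Q \<in> cycle_sets S f. Q \<subseteq> T}"
  have e1: "num_cycles (S - T) (fr f T) + t = num_cycles S f"
    using count_fr[OF fp fin] t_def by simp
  have t2: "{Q \<in> cycle_sets S f. Q \<subseteq> T} = {Q \<in> cycle_sets S (\<pi> \<circ> \<sigma>). Q \<subseteq> T}"
  proof (rule cyc_in_T_eq[OF fp psp fin])
    fix z
    show "f z \<in> T \<Longrightarrow> (\<pi> \<circ> \<sigma>) z = f z"
    proof -
      assume "f z \<in> T"
      then have "\<sigma> z \<in> T" using tauNT[of "\<sigma> z"] unfolding f_def by (cases "\<sigma> z \<in> T") auto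
      then show ?thesis using piT unfolding f_def by simp
    qed
    show "(\<pi> \<circ> \<sigma>) z \<in> T \<Longrightarrow> f z = (\<pi> \<circ> \<sigma>) z"
    proof -
      assume "(\<pi> \<circ> \<sigma>) z \<in> T"
      then have "\<sigma> z \<in> T" using piNT[of "\<sigma> z"] by auto
      then show ?thesis using piT unfolding f_def by simp
    qed
  qed
  have e3: "num_cycles (S - T) (fr (\<pi> \<circ> \<sigma>) T) + t = num_cycles S (\<pi> \<circ> \<sigma>)"
    using count_fr[OF psp fin, of T] t_def t2 by simp
  have tpi: "{Q \<in> cycle_sets S \<pi>. Q \<subseteq> T} = {T}"
  proof -
    have "(\<pi> ^^ 2) a = a" using pa pb by (simp add: numeral_2_eq_2)
    then have oa: "orbit \<pi> a = {(\<pi> ^^ m) a | m. m < 2}" using orbit_altdef_bounded[where f=\<pi> and n=2 and s=a] by simp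
    have "{(\<pi> ^^ m) a | m. m < (2::nat)} = {a, b}"
    proof
      show "{(\<pi> ^^ m) a | m. m < (2::nat)} \<subseteq> {a, b}"
      proof
        fix y assume "y \<in> {(\<pi> ^^ m) a | m. m < (2::nat)}"
        then obtain m :: nat where "y = (\<pi> ^^ m) a" "m < 2" by blast
        then have "m = 0 \<or> m = 1" by auto
        then show "y \<in> {a, b}" using \<open>y = _\<close> pa by auto
      qed
      have "a \<in> {(\<pi> ^^ m) a | m. m < (2::nat)}" by (intro CollectI exI[of _ "0::nat"]) simp
      moreover have "b \<in> {(\<pi> ^^ m) a | m. m < (2::nat)}" using pa by (intro CollectI exI[of _ "1::nat"]) simp
      ultimately show "{a, b} \<subseteq> {(\<pi> ^^ m) a | m. m < (2::nat)}" by blast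
    qed
    then have oaT: "orbit \<pi> a = T" using oa T_def by simp
    have "Q = T" if Qa: "Q \<in> cycle_sets S \<pi>" "Q \<subseteq> T" for Q
    proof -
      obtain y where y: "y \<in> S" "Q = orbit \<pi> y" using Qa(1) unfolding cycle_sets_def by blast
      have "y \<in> Q" using y self_orb[OF pp fin] by simp
      then have "y \<in> orbit \<pi> a" using Qa(2) oaT by blast
      then have "orbit \<pi> y = orbit \<pi> a" by (rule orbit_eq_of_mem[OF perm_of[OF pp fin]])
      then show "Q = T" using y oaT by simp
    qed
    moreover have "T \<in> cycle_sets S \<pi>" using oaT aS unfolding cycle_sets_def by force
    ultimately show ?thesis by blast
  qed
  have e2: "num_cycles (S - T) h + 1 = num_cycles S \<pi>"
    using count_fr[OF pp fin, of T] tpi h_fr by simp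
  have frfp: "fr f T permutes (S - T)" using fr_permutes[OF fp fin] .
  have finST: "finite (S - T)" using fin by simp
  have e4: "num_cycles (UNIV \<times> (S - T)) (bowtie h (fr f T)) = num_cycles (S - T) (fr (\<pi> \<circ> \<sigma>) T)"
    using bowtie_count[OF finST hp frfp] comp by simp
  have e5: "num_cycles (UNIV \<times> S) (bowtie \<pi> \<sigma>) = num_cycles S (\<pi> \<circ> \<sigma>)"
    using bowtie_count[OF fin pp sp] .
  have e6: "card (S - T) + 2 = card S"
    using card_Diff_subset[OF _ TS] fin TS ab T_def card_mono[OF fin TS] by (simp add: finite_subset)
  have e7: "int (num_cycles S f) = int (num_cycles S \<sigma>) + (if orbit \<sigma> a = orbit \<sigma> b then 1 else -1)"
    unfolding f_def tab using transp_count[OF fin sp aS bS ab] .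
  have br: "is_bridge S \<sigma> \<tau> \<longleftrightarrow> orbit \<sigma> a \<noteq> orbit \<sigma> b"
  proof
    assume "is_bridge S \<sigma> \<tau>"
    then obtain a' b' where ab': "a' \<noteq> b'" "\<tau> = transpose a' b'" "orbit \<sigma> a' \<noteq> orbit \<sigma> b'"
      unfolding is_bridge_def by blast
    have "{a', b'} = {a, b}" using supp_transpose[OF ab'(1)] supp_transpose[OF ab] ab'(2) tab by simp
    then have "(a' = a \<and> b' = b) \<or> (a' = b \<and> b' = a)" unfolding doubleton_eq_iff by simp
    then show "orbit \<sigma> a \<noteq> orbit \<sigma> b" using ab'(3) by auto
  next
    assume "orbit \<sigma> a \<noteq> orbit \<sigma> b"
    then show "is_bridge S \<sigma> \<tau>" unfolding is_bridge_def using ab aS bS tab by blast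
  qed
  have R1: "real (num_cycles (S - T) (fr f T)) + real t = real (num_cycles S f)"
    using arg_cong[OF e1, of real] by simp
  have R2: "real (num_cycles (S - T) h) + 1 = real (num_cycles S \<pi>)"
    using arg_cong[OF e2, of real] by simp
  have R3: "real (num_cycles (S - T) (fr (\<pi> \<circ> \<sigma>) T)) + real t = real (num_cycles S (\<pi> \<circ> \<sigma>))"
    using arg_cong[OF e3, of real] by simp
  have R6: "real (card (S - T)) + 2 = real (card S)"
    using arg_cong[OF e6, of real] by simp
  have R7: "real (num_cycles S f) = real (num_cycles S \<sigma>) + (if orbit \<sigma> a = orbit \<sigma> b then 1 else -1)"
    using arg_cong[OF e7, of real_of_int] by simp
  let ?X = "real (card S) + real (num_cycles S \<sigma>) - real (num_cycles S \<pi>) - real (num_cycles S (\<pi> \<circ> \<sigma>))"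
  let ?Y = "real (card (S - T)) + real (num_cycles (S - T) (fr f T)) - real (num_cycles (S - T) h)
     - real (num_cycles (S - T) (fr (\<pi> \<circ> \<sigma>) T))"
  have G: "genus S \<sigma> \<pi> - genus (S - supp \<tau>) (remove_perm \<sigma> \<tau>) (restrict_perm \<pi> (S - supp \<tau>))
     = (?X - ?Y) / 2"
    unfolding suppT rem genus_def h_def[symmetric] e4 e5 by (simp add: diff_divide_distrib)
  show ?thesis
  proof (cases "orbit \<sigma> a = orbit \<sigma> b")
    case True
    then have "real (num_cycles S f) = real (num_cycles S \<sigma>) + 1" using R7 by simp
    then have "?X - ?Y = 0" using R1 R2 R3 R6 by linarith
    then show ?thesis using G br True by simp
  next
    case False
    then have "real (num_cycles S f) = real (num_cycles S \<sigma>) - 1" using R7 by simp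
    then have "?X - ?Y = 2" using R1 R2 R3 R6 by linarith
    then show ?thesis using G br False by simp
  qed
qed

end
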